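(* Let $\mathcal{A}\subseteq\mathcal{B}(\mathcal{H})$ be a von Neumann algebra and $P:\mathcal{A}\to\mathcal{A}$ a Markov operator with $P^2=P$ which admits a Holevo representation $P(x)=\sum_{i=1}^n\varphi_i(x)a_i$ with linearly independent normal states $\varphi_1,\dots,\varphi_n$ and linearly independent positive elements $a_1,\dots,a_n$. Then $a_1,\dots,a_n$ and $\varphi_1,\dots,\varphi_n$ are uniquely determined up to permutation.
   Context: A Markov operator is a normal completely positive unital linear map on $\mathcal{A}$ ($\mathbbm{1}\in\mathcal{A}$). A Holevo representation of $P$ is an expression $P(x)=\sum_{i=1}^n\varphi_i(x)a_i$ for all $x\in\mathcal{A}$, with normal states $\varphi_i$ on $\mathcal{A}$ and $a_i\in\mathcal{A}_+$ with $\sum_{i=1}^na_i=\mathbbm{1}$. *)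

theory Defs
  imports "HOL-Analysis.Analysis"
begin

text \<open>Complex Hilbert spaces are encoded as real Hilbert spaces ('h :: {real_inner, complete_space})
  equipped with an orthogonal complex structure J (J o J = -id, J isometric).
  Multiplication by the imaginary unit i is the map x |-> - J x, and the complex inner
  product (conjugate-linear in the first argument) is
  cinner J x y = (x \<bullet> y) + i (x \<bullet> J y).\<close>

definition complex_structure :: "('h::real_inner \<Rightarrow> 'h) \<Rightarrow> bool" where
  "complex_structure J \<longleftrightarrow> bounded_linear J \<and> (\<forall>x. J (J x) = - x) \<and> (\<forall>x y. J x \<bullet> J y = x \<bullet> y)"

definition cmul :: "('h::real_inner \<Rightarrow> 'h) \<Rightarrow> complex \<Rightarrow> 'h \<Rightarrow> 'h" where
  "cmul J c x = Re c *\<^sub>R x - Im c *\<^sub>R J x"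

definition cinner :: "('h::real_inner \<Rightarrow> 'h) \<Rightarrow> 'h \<Rightarrow> 'h \<Rightarrow> complex" where
  "cinner J x y = Complex (x \<bullet> y) (x \<bullet> J y)"

definition bop :: "('h::real_inner \<Rightarrow> 'h) \<Rightarrow> ('h \<Rightarrow> 'h) \<Rightarrow> bool" where
  "bop J T \<longleftrightarrow> bounded_linear T \<and> (\<forall>x. T (J x) = J (T x))"

definition is_adjoint :: "('h::real_inner \<Rightarrow> 'h) \<Rightarrow> ('h \<Rightarrow> 'h) \<Rightarrow> bool" where
  "is_adjoint T S \<longleftrightarrow> (\<forall>x y. T x \<bullet> y = x \<bullet> S y)"

definition commutant :: "('h::real_inner \<Rightarrow> 'h) \<Rightarrow> ('h \<Rightarrow> 'h) set \<Rightarrow> ('h \<Rightarrow> 'h) set" where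
  "commutant J A = {T. bop J T \<and> (\<forall>S\<in>A. T \<circ> S = S \<circ> T)}"

definition von_neumann_algebra :: "('h::real_inner \<Rightarrow> 'h) \<Rightarrow> ('h \<Rightarrow> 'h) set \<Rightarrow> bool" where
  "von_neumann_algebra J A \<longleftrightarrow> complex_structure J \<and> A \<subseteq> {T. bop J T}
     \<and> (\<forall>T\<in>A. \<exists>S\<in>A. is_adjoint T S) \<and> commutant J (commutant J A) = A"

definition positive_op :: "('h::real_inner \<Rightarrow> 'h) \<Rightarrow> ('h \<Rightarrow> 'h) \<Rightarrow> bool" where
  "positive_op J T \<longleftrightarrow> (\<forall>\<xi>. Im (cinner J \<xi> (T \<xi>)) = 0 \<and> Re (cinner J \<xi> (T \<xi>)) \<ge> 0)"

definition selfadjoint_part :: "('h::real_inner \<Rightarrow> 'h) set \<Rightarrow> ('h \<Rightarrow> 'h) set" where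
  "selfadjoint_part A = {T\<in>A. is_adjoint T T}"

definition op_le :: "('h::real_inner \<Rightarrow> 'h) \<Rightarrow> ('h \<Rightarrow> 'h) \<Rightarrow> ('h \<Rightarrow> 'h) \<Rightarrow> bool" where
  "op_le J S T \<longleftrightarrow> positive_op J (\<lambda>x. T x - S x)"

definition is_lub_in :: "('h::real_inner \<Rightarrow> 'h) \<Rightarrow> ('h \<Rightarrow> 'h) set \<Rightarrow> ('h \<Rightarrow> 'h) set \<Rightarrow> ('h \<Rightarrow> 'h) \<Rightarrow> bool" where
  "is_lub_in J B D s \<longleftrightarrow> s \<in> B \<and> (\<forall>d\<in>D. op_le J d s) \<and> (\<forall>t\<in>B. (\<forall>d\<in>D. op_le J d t) \<longrightarrow> op_le J s t)"

text \<open>Bounded upward-directed nonempty families of self-adjoint elements of A with supremum s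
  (i.e. bounded increasing nets).\<close>
definition monotone_net :: "('h::real_inner \<Rightarrow> 'h) \<Rightarrow> ('h \<Rightarrow> 'h) set \<Rightarrow> ('h \<Rightarrow> 'h) set \<Rightarrow> ('h \<Rightarrow> 'h) \<Rightarrow> bool" where
  "monotone_net J A D s \<longleftrightarrow> D \<noteq> {} \<and> D \<subseteq> selfadjoint_part A
     \<and> (\<forall>x\<in>D. \<forall>y\<in>D. \<exists>z\<in>D. op_le J x z \<and> op_le J y z)
     \<and> is_lub_in J (selfadjoint_part A) D s"

definition linear_functional_on :: "('h::real_inner \<Rightarrow> 'h) \<Rightarrow> ('h \<Rightarrow> 'h) set \<Rightarrow> (('h \<Rightarrow> 'h) \<Rightarrow> complex) \<Rightarrow> bool" where
  "linear_functional_on J A f \<longleftrightarrow> (\<forall>S\<in>A. \<forall>T\<in>A. f (\<lambda>x. S x + T x) = f S + f T)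
     \<and> (\<forall>c. \<forall>T\<in>A. f (\<lambda>x. cmul J c (T x)) = c * f T)"

definition linear_map_on :: "('h::real_inner \<Rightarrow> 'h) \<Rightarrow> ('h \<Rightarrow> 'h) set \<Rightarrow> (('h \<Rightarrow> 'h) \<Rightarrow> ('h \<Rightarrow> 'h)) \<Rightarrow> bool" where
  "linear_map_on J A P \<longleftrightarrow> (\<forall>S\<in>A. \<forall>T\<in>A. P (\<lambda>x. S x + T x) = (\<lambda>x. P S x + P T x))
     \<and> (\<forall>c. \<forall>T\<in>A. P (\<lambda>x. cmul J c (T x)) = (\<lambda>x. cmul J c (P T x)))"

definition normal_state :: "('h::real_inner \<Rightarrow> 'h) \<Rightarrow> ('h \<Rightarrow> 'h) set \<Rightarrow> (('h \<Rightarrow> 'h) \<Rightarrow> complex) \<Rightarrow> bool" where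
  "normal_state J A \<phi> \<longleftrightarrow> linear_functional_on J A \<phi>
     \<and> (\<forall>T\<in>A. positive_op J T \<longrightarrow> Im (\<phi> T) = 0 \<and> Re (\<phi> T) \<ge> 0)
     \<and> \<phi> id = 1
     \<and> (\<forall>D s. monotone_net J A D s \<longrightarrow> \<phi> s = complex_of_real (SUP T\<in>D. Re (\<phi> T)))"

definition matrix_positive :: "('h::real_inner \<Rightarrow> 'h) \<Rightarrow> nat \<Rightarrow> (nat \<Rightarrow> nat \<Rightarrow> ('h \<Rightarrow> 'h)) \<Rightarrow> bool" where
  "matrix_positive J n x \<longleftrightarrow> (\<forall>\<xi>::nat \<Rightarrow> 'h.
     Im (\<Sum>i<n. \<Sum>j<n. cinner J (\<xi> i) (x i j (\<xi> j))) = 0 \<and>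
     Re (\<Sum>i<n. \<Sum>j<n. cinner J (\<xi> i) (x i j (\<xi> j))) \<ge> 0)"

definition completely_positive :: "('h::real_inner \<Rightarrow> 'h) \<Rightarrow> ('h \<Rightarrow> 'h) set \<Rightarrow> (('h \<Rightarrow> 'h) \<Rightarrow> ('h \<Rightarrow> 'h)) \<Rightarrow> bool" where
  "completely_positive J A P \<longleftrightarrow> (\<forall>n x. (\<forall>i<n. \<forall>j<n. x i j \<in> A) \<longrightarrow> matrix_positive J n x
     \<longrightarrow> matrix_positive J n (\<lambda>i j. P (x i j)))"

definition markov_operator :: "('h::real_inner \<Rightarrow> 'h) \<Rightarrow> ('h \<Rightarrow> 'h) set \<Rightarrow> (('h \<Rightarrow> 'h) \<Rightarrow> ('h \<Rightarrow> 'h)) \<Rightarrow> bool" where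
  "markov_operator J A P \<longleftrightarrow> (\<forall>T\<in>A. P T \<in> A) \<and> linear_map_on J A P
     \<and> completely_positive J A P \<and> P id = id
     \<and> (\<forall>D s. monotone_net J A D s \<longrightarrow> is_lub_in J (selfadjoint_part A) (P ` D) (P s))"

definition holevo_rep :: "('h::real_inner \<Rightarrow> 'h) \<Rightarrow> ('h \<Rightarrow> 'h) set \<Rightarrow> (('h \<Rightarrow> 'h) \<Rightarrow> ('h \<Rightarrow> 'h))
    \<Rightarrow> nat \<Rightarrow> (nat \<Rightarrow> ('h \<Rightarrow> 'h) \<Rightarrow> complex) \<Rightarrow> (nat \<Rightarrow> ('h \<Rightarrow> 'h)) \<Rightarrow> bool" where
  "holevo_rep J A P n \<phi> a \<longleftrightarrow>
     (\<forall>i<n. normal_state J A (\<phi> i) \<and> a i \<in> A \<and> positive_op J (a i))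
     \<and> (\<forall>\<xi>. (\<Sum>i<n. a i \<xi>) = \<xi>)
     \<and> (\<forall>x\<in>A. \<forall>\<xi>. P x \<xi> = (\<Sum>i<n. cmul J (\<phi> i x) (a i \<xi>)))"

definition lin_indep_functionals :: "('h \<Rightarrow> 'h) set \<Rightarrow> nat \<Rightarrow> (nat \<Rightarrow> ('h \<Rightarrow> 'h) \<Rightarrow> complex) \<Rightarrow> bool" where
  "lin_indep_functionals A n \<phi> \<longleftrightarrow>
     (\<forall>c::nat \<Rightarrow> complex. (\<forall>x\<in>A. (\<Sum>i<n. c i * \<phi> i x) = 0) \<longrightarrow> (\<forall>i<n. c i = 0))"

definition lin_indep_ops :: "('h::real_inner \<Rightarrow> 'h) \<Rightarrow> nat \<Rightarrow> (nat \<Rightarrow> ('h \<Rightarrow> 'h)) \<Rightarrow> bool" where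
  "lin_indep_ops J n a \<longleftrightarrow>
     (\<forall>c::nat \<Rightarrow> complex. (\<forall>\<xi>. (\<Sum>i<n. cmul J (c i) (a i \<xi>)) = 0) \<longrightarrow> (\<forall>i<n. c i = 0))"

end

theory Submission
  imports Defs
begin


lemma half_comb:
  fixes c :: "nat \<Rightarrow> nat \<Rightarrow> real" and d :: "nat \<Rightarrow> nat \<Rightarrow> real"
  assumes c0: "\<forall>j<m. \<forall>i<n. c j i \<ge> 0" and d0: "\<forall>i<n. \<forall>j<m. d i j \<ge> 0"
    and eq: "\<forall>j<m. \<forall>k<m. (\<Sum>i<n. c j i * d i k) = (if j = k then 1 else 0)"
  shows "(\<forall>j<m. \<forall>i<n. \<forall>k<m. c j i > 0 \<longrightarrow> k \<noteq> j \<longrightarrow> d i k = 0)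
     \<and> (\<exists>\<sigma>. inj_on \<sigma> {..<m} \<and> \<sigma> ` {..<m} \<subseteq> {..<n} \<and> (\<forall>j<m. c j (\<sigma> j) > 0 \<and> d (\<sigma> j) j > 0))"
proof -
  have Z: "c j i > 0 \<Longrightarrow> k \<noteq> j \<Longrightarrow> d i k = 0" if "j<m" "i<n" "k<m" for j i k
  proof -
    assume "c j i > 0" "k \<noteq> j"
    have "(\<Sum>i<n. c j i * d i k) = 0" using eq that \<open>k \<noteq> j\<close> by auto
    hence "\<forall>i\<in>{..<n}. c j i * d i k = 0"
      by (subst sum_nonneg_eq_0_iff[symmetric]) (use c0 d0 that in auto)
    hence "c j i * d i k = 0" using that by auto
    thus ?thesis using \<open>c j i > 0\<close> by simp
  qed
  have E: "\<exists>i. i<n \<and> c j i > 0 \<and> d i j > 0" if "j<m" for j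
  proof (rule ccontr)
    assume "\<not> ?thesis"
    hence "\<forall>i\<in>{..<n}. c j i * d i j = 0" using c0 d0 that
      by (metis lessThan_iff mult_eq_0_iff order_less_le)
    hence "(\<Sum>i<n. c j i * d i j) = 0" by (intro sum.neutral) auto
    thus False using eq that by auto
  qed
  define \<sigma> where "\<sigma> j = (SOME i. i<n \<and> c j i > 0 \<and> d i j > 0)" for j
  have S: "\<sigma> j < n \<and> c j (\<sigma> j) > 0 \<and> d (\<sigma> j) j > 0" if "j<m" for j
    unfolding \<sigma>_def using someI_ex[OF E[OF that]] .
  have "inj_on \<sigma> {..<m}"
  proof (rule inj_onI)
    fix j j' assume "j \<in> {..<m}" "j' \<in> {..<m}" "\<sigma> j = \<sigma> j'"
    show "j = j'"
    proof (rule ccontr)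
      assume "j \<noteq> j'"
      have "d (\<sigma> j) j' = 0" using Z[of j "\<sigma> j" j'] S \<open>j \<in> {..<m}\<close> \<open>j' \<in> {..<m}\<close> \<open>j \<noteq> j'\<close> by auto
      thus False using S[of j'] \<open>j' \<in> {..<m}\<close> \<open>\<sigma> j = \<sigma> j'\<close> by auto
    qed
  qed
  thus ?thesis using S Z by (auto intro!: exI[of _ \<sigma>])
qed

lemma comb:
  fixes c :: "nat \<Rightarrow> nat \<Rightarrow> real" and d :: "nat \<Rightarrow> nat \<Rightarrow> real"
  assumes c0: "\<forall>j<m. \<forall>i<n. c j i \<ge> 0" and d0: "\<forall>i<n. \<forall>j<m. d i j \<ge> 0"
    and eqC: "\<forall>j<m. \<forall>k<m. (\<Sum>i<n. c j i * d i k) = (if j = k then 1 else 0)"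
    and eqD: "\<forall>i<n. \<forall>l<n. (\<Sum>j<m. d i j * c j l) = (if i = l then 1 else 0)"
    and col: "\<forall>i<n. (\<Sum>j<m. c j i) = 1"
  shows "m = n \<and> (\<exists>\<sigma>. \<sigma> permutes {..<n} \<and> (\<forall>j<n. \<forall>i<n. c j i = (if i = \<sigma> j then 1 else 0)))"
proof -
  note H1 = half_comb[OF c0 d0 eqC]
  note H2 = half_comb[of n m d c, OF d0 c0 eqD]
  from H1 obtain \<sigma> where si: "inj_on \<sigma> {..<m}" "\<sigma> ` {..<m} \<subseteq> {..<n}"
    and sp: "\<forall>j<m. c j (\<sigma> j) > 0 \<and> d (\<sigma> j) j > 0" by blast
  from H2 obtain \<tau> where ti: "inj_on \<tau> {..<n}" "\<tau> ` {..<n} \<subseteq> {..<m}" by blast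
  have "m \<le> n" using card_inj_on_le[OF si] by simp
  moreover have "n \<le> m" using card_inj_on_le[OF ti] by simp
  ultimately have mn: "m = n" by simp
  have im: "\<sigma> ` {..<n} = {..<n}" using endo_inj_surj[of "{..<n}" \<sigma>] si mn by simp
  define \<sigma>' where "\<sigma>' j = (if j < n then \<sigma> j else j)" for j
  have bij: "bij_betw \<sigma>' {..<n} {..<n}"
    unfolding bij_betw_def
  proof
    show "inj_on \<sigma>' {..<n}" using si mn unfolding \<sigma>'_def inj_on_def by auto
    show "\<sigma>' ` {..<n} = {..<n}" using im unfolding \<sigma>'_def by (auto simp: image_def)
  qed
  have perm: "\<sigma>' permutes {..<n}" by (rule bij_imp_permutes[OF bij]) (auto simp: \<sigma>'_def)
  have zero: "c j i = 0" if "j<n" "i<n" "i \<noteq> \<sigma> j" for j i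
  proof (rule ccontr)
    assume "c j i \<noteq> 0"
    hence pos: "c j i > 0" using c0 that mn by (simp add: order_less_le)
    have "i \<in> \<sigma> ` {..<n}" using im that by simp
    then obtain j' where j': "j' < n" "i = \<sigma> j'" by auto
    have "j' \<noteq> j" using j' that by auto
    hence "d i j' = 0" using H1 pos that mn j' by auto
    thus False using sp j' mn by auto
  qed
  have one: "c j (\<sigma> j) = 1" if "j<n" for j
  proof -
    have sj: "\<sigma> j < n" using si that mn by auto
    have "(\<Sum>k<m. c k (\<sigma> j)) = c j (\<sigma> j)"
    proof (rule sum.remove[THEN trans])
      show "finite {..<m}" by simp
      show "j \<in> {..<m}" using that mn by simp
      have "\<forall>k\<in>{..<m} - {j}. c k (\<sigma> j) = 0"
      proof
        fix k assume k: "k \<in> {..<m} - {j}"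
        hence "\<sigma> j \<noteq> \<sigma> k" using si that mn unfolding inj_on_def by auto
        thus "c k (\<sigma> j) = 0" using zero[of k "\<sigma> j"] k sj mn by auto
      qed
      thus "c j (\<sigma> j) + sum (\<lambda>k. c k (\<sigma> j)) ({..<m} - {j}) = c j (\<sigma> j)" by simp
    qed
    thus ?thesis using col sj by simp
  qed
  have "\<forall>j<n. \<forall>i<n. c j i = (if i = \<sigma>' j then 1 else 0)"
    using zero one unfolding \<sigma>'_def by auto
  thus ?thesis using mn perm by blast
qed


lemma cmul_1[simp]: "cmul J 1 y = y" by (simp add: cmul_def)
lemma cmul_0[simp]: "cmul J 0 y = 0" by (simp add: cmul_def)
lemma cmul_sum_left: "cmul J (\<Sum>i\<in>S. f i) y = (\<Sum>i\<in>S. cmul J (f i) y)"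
  by (simp add: cmul_def Re_sum Im_sum scaleR_sum_left sum_subtractf)
lemma cmul_diff_left: "cmul J (c - d) y = cmul J c y - cmul J d y"
  by (simp add: cmul_def algebra_simps)

lemma cs_lin: "complex_structure J \<Longrightarrow> linear J"
  unfolding complex_structure_def using bounded_linear.linear by blast

lemma comm_add:
  assumes X: "X \<subseteq> {T. bop J T}" and J: "complex_structure J"
    and S: "S \<in> commutant J X" and T: "T \<in> commutant J X"
  shows "(\<lambda>x. S x + T x) \<in> commutant J X"
proof -
  have lJ: "linear J" using cs_lin[OF J] .
  have bS: "bounded_linear S" "\<forall>x. S (J x) = J (S x)" and cS: "\<forall>R\<in>X. S \<circ> R = R \<circ> S"
    using S by (auto simp: commutant_def bop_def)
  have bT: "bounded_linear T" "\<forall>x. T (J x) = J (T x)" and cT: "\<forall>R\<in>X. T \<circ> R = R \<circ> T"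
    using T by (auto simp: commutant_def bop_def)
  have "bounded_linear (\<lambda>x. S x + T x)" using bS bT bounded_linear_add by blast
  moreover have "\<forall>x. S (J x) + T (J x) = J (S x + T x)" using bS bT lJ by (simp add: linear_add)
  moreover have "\<forall>R\<in>X. (\<lambda>x. S x + T x) \<circ> R = R \<circ> (\<lambda>x. S x + T x)"
  proof
    fix R assume R: "R \<in> X"
    hence lR: "linear R" using X by (auto simp: bop_def bounded_linear.linear)
    have "S (R x) = R (S x)" "T (R x) = R (T x)" for x
      using cS cT R by (metis comp_apply)+
    thus "(\<lambda>x. S x + T x) \<circ> R = R \<circ> (\<lambda>x. S x + T x)" using lR by (auto simp: linear_add)
  qed
  ultimately show ?thesis by (simp add: commutant_def bop_def)
qed

lemma comm_cmul:
  assumes X: "X \<subseteq> {T. bop J T}" and J: "complex_structure J"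
    and T: "T \<in> commutant J X"
  shows "(\<lambda>x. cmul J c (T x)) \<in> commutant J X"
proof -
  have lJ: "linear J" using cs_lin[OF J] .
  have bJ: "bounded_linear J" using J by (simp add: complex_structure_def)
  have JJ: "\<forall>x. J (J x) = - x" using J by (simp add: complex_structure_def)
  have bT: "bounded_linear T" "\<forall>x. T (J x) = J (T x)" and cT: "\<forall>R\<in>X. T \<circ> R = R \<circ> T"
    using T by (auto simp: commutant_def bop_def)
  have b1: "bounded_linear (\<lambda>x. Re c *\<^sub>R T x)"
    by (rule bounded_linear_compose[OF bounded_linear_scaleR_right bT(1)])
  have b2: "bounded_linear (\<lambda>x. Im c *\<^sub>R J (T x))"
    by (rule bounded_linear_compose[OF bounded_linear_scaleR_right bounded_linear_compose[OF bJ bT(1)]])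
  have "bounded_linear (\<lambda>x. Re c *\<^sub>R T x - Im c *\<^sub>R J (T x))"
    using bounded_linear_sub[OF b1 b2] .
  hence "bounded_linear (\<lambda>x. cmul J c (T x))" by (simp add: cmul_def)
  moreover have "\<forall>x. cmul J c (T (J x)) = J (cmul J c (T x))"
    using bT lJ by (simp add: cmul_def linear_diff linear_scale)
  moreover have "\<forall>R\<in>X. (\<lambda>x. cmul J c (T x)) \<circ> R = R \<circ> (\<lambda>x. cmul J c (T x))"
  proof
    fix R assume R: "R \<in> X"
    hence lR: "linear R" and RJ: "\<forall>x. R (J x) = J (R x)" using X by (auto simp: bop_def bounded_linear.linear)
    have "T (R x) = R (T x)" for x
      using cT R by (metis comp_apply)
    thus "(\<lambda>x. cmul J c (T x)) \<circ> R = R \<circ> (\<lambda>x. cmul J c (T x))"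
      using lR RJ by (auto simp: cmul_def linear_diff linear_scale)
  qed
  ultimately show ?thesis by (simp add: commutant_def bop_def)
qed

lemma comm_zero:
  assumes X: "X \<subseteq> {T. bop J T}" and J: "complex_structure J"
  shows "(\<lambda>x. 0) \<in> commutant J X"
proof -
  have h: "\<forall>R\<in>X. R 0 = 0"
  proof
    fix R assume R: "R \<in> X"
    hence lR: "linear R" using X by (auto simp: bop_def bounded_linear.linear)
    thus "R 0 = 0" by (auto simp: linear_0)
  qed
  moreover have "J 0 = 0" using cs_lin[OF J] by (simp add: linear_0)
  ultimately show ?thesis unfolding commutant_def bop_def by (auto simp: fun_eq_iff bounded_linear_zero)
qed

lemma vna_facts:
  assumes "von_neumann_algebra J A"
  shows "commutant J A \<subseteq> {T. bop J T}" "complex_structure J" "A = commutant J (commutant J A)"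
  using assms by (auto simp: von_neumann_algebra_def commutant_def)

lemma vna_add: "von_neumann_algebra J A \<Longrightarrow> S \<in> A \<Longrightarrow> T \<in> A \<Longrightarrow> (\<lambda>x. S x + T x) \<in> A"
  using vna_facts[of J A] comm_add[of "commutant J A" J S T] by auto
lemma vna_cmul: "von_neumann_algebra J A \<Longrightarrow> T \<in> A \<Longrightarrow> (\<lambda>x. cmul J c (T x)) \<in> A"
  using vna_facts[of J A] comm_cmul[of "commutant J A" J T c] by auto
lemma vna_zero: "von_neumann_algebra J A \<Longrightarrow> (\<lambda>x. 0) \<in> A"
  using vna_facts[of J A] comm_zero[of "commutant J A" J] by auto

lemma lc_in:
  fixes k :: nat
  assumes V: "von_neumann_algebra J A" and a: "\<forall>i<k. a i \<in> A"
  shows "(\<lambda>\<xi>. \<Sum>i<k. cmul J (c i) (a i \<xi>)) \<in> A"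
  using a
proof (induction k)
  case 0 thus ?case using vna_zero[OF V] by simp
next
  case (Suc k)
  have "(\<lambda>\<xi>. (\<lambda>\<xi>. \<Sum>i<k. cmul J (c i) (a i \<xi>)) \<xi> + (\<lambda>\<xi>. cmul J (c k) (a k \<xi>)) \<xi>) \<in> A"
    using Suc vna_add[OF V] vna_cmul[OF V] by simp
  thus ?case by simp
qed

lemma lc_lin:
  fixes k :: nat
  assumes V: "von_neumann_algebra J A" and f: "linear_functional_on J A f" and a: "\<forall>i<k. a i \<in> A"
  shows "f (\<lambda>\<xi>. \<Sum>i<k. cmul J (c i) (a i \<xi>)) = (\<Sum>i<k. c i * f (a i))"
  using a
proof (induction k)
  case 0
  have z: "(\<lambda>x::'a. 0::'a) \<in> A" using vna_zero[OF V] .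
  have l: "\<forall>T\<in>A. f (\<lambda>x. cmul J 0 (T x)) = 0 * f T"
    using f unfolding linear_functional_on_def by blast
  have "f (\<lambda>x. cmul J 0 ((\<lambda>x::'a. 0::'a) x)) = 0 * f (\<lambda>x. 0)"
    using bspec[OF l z] by simp
  thus ?case by simp
next
  case (Suc k)
  have i1: "(\<lambda>\<xi>. \<Sum>i<k. cmul J (c i) (a i \<xi>)) \<in> A" using lc_in[OF V] Suc.prems by simp
  have i2: "(\<lambda>\<xi>. cmul J (c k) (a k \<xi>)) \<in> A" using vna_cmul[OF V] Suc.prems by simp
  have "f (\<lambda>\<xi>. (\<lambda>\<xi>. \<Sum>i<k. cmul J (c i) (a i \<xi>)) \<xi> + (\<lambda>\<xi>. cmul J (c k) (a k \<xi>)) \<xi>)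
     = f (\<lambda>\<xi>. \<Sum>i<k. cmul J (c i) (a i \<xi>)) + f (\<lambda>\<xi>. cmul J (c k) (a k \<xi>))"
    using f i1 i2 unfolding linear_functional_on_def by (metis (no_types))
  moreover have "f (\<lambda>\<xi>. cmul J (c k) (a k \<xi>)) = c k * f (a k)"
  proof -
    have m: "\<forall>T\<in>A. f (\<lambda>x. cmul J (c k) (T x)) = c k * f T"
      using f unfolding linear_functional_on_def by blast
    show ?thesis using bspec[OF m, of "a k"] Suc.prems by simp
  qed
  ultimately show ?case using Suc by simp
qed

lemma indep_eq:
  assumes "lin_indep_ops J n a"
    and "\<forall>\<xi>. (\<Sum>i<n. cmul J (c i) (a i \<xi>)) = (\<Sum>i<n. cmul J (d i) (a i \<xi>))"
  shows "\<forall>i<n. c i = d i"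
proof -
  have "\<forall>\<xi>. (\<Sum>i<n. cmul J (c i - d i) (a i \<xi>)) = 0"
    using assms(2) by (simp add: cmul_diff_left sum_subtractf)
  thus ?thesis using assms(1) unfolding lin_indep_ops_def by fastforce
qed



lemma step1:
  assumes V: "von_neumann_algebra J A" and M: "markov_operator J A P"
    and I: "\<forall>x\<in>A. P (P x) = P x" and H: "holevo_rep J A P n \<phi> a"
    and LF: "lin_indep_functionals A n \<phi>" and LO: "lin_indep_ops J n a"
  shows "\<forall>x\<in>A. \<forall>i<n. \<phi> i (P x) = \<phi> i x"
    and "\<forall>i<n. \<forall>j<n. \<phi> i (a j) = (if i = j then 1 else 0)"
proof -
  have rep: "\<forall>x\<in>A. \<forall>\<xi>. P x \<xi> = (\<Sum>i<n. cmul J (\<phi> i x) (a i \<xi>))"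
    and aA: "\<forall>i<n. a i \<in> A" and lf: "\<forall>i<n. linear_functional_on J A (\<phi> i)"
    using H by (auto simp: holevo_rep_def normal_state_def)
  have PA: "\<forall>x\<in>A. P x \<in> A" using M by (simp add: markov_operator_def)
  have Pfun: "P x = (\<lambda>\<xi>. \<Sum>i<n. cmul J (\<phi> i x) (a i \<xi>))" if "x \<in> A" for x
    using rep that by auto
  have A1: "\<phi> i (P x) = (\<Sum>j<n. \<phi> j x * \<phi> i (a j))" if "x \<in> A" "i < n" for x i
    using Pfun[OF that(1)] lc_lin[OF V, of "\<phi> i" n a] lf aA that by simp
  have A2: "\<forall>i<n. \<phi> i (P x) = \<phi> i x" if x: "x \<in> A" for x
  proof (rule indep_eq[OF LO], rule allI)
    fix \<xi>
    have "(\<Sum>i<n. cmul J (\<phi> i (P x)) (a i \<xi>)) = P (P x) \<xi>" using rep PA x by auto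
    also have "\<dots> = P x \<xi>" using I x by simp
    also have "\<dots> = (\<Sum>i<n. cmul J (\<phi> i x) (a i \<xi>))" using rep x by auto
    finally show "(\<Sum>i<n. cmul J (\<phi> i (P x)) (a i \<xi>)) = (\<Sum>i<n. cmul J (\<phi> i x) (a i \<xi>))" .
  qed
  thus "\<forall>x\<in>A. \<forall>i<n. \<phi> i (P x) = \<phi> i x" by blast
  show "\<forall>i<n. \<forall>j<n. \<phi> i (a j) = (if i = j then 1 else 0)"
  proof (intro allI impI)
    fix i j assume i: "i < n" and j: "j < n"
    define c where "c k = \<phi> i (a k) - (if i = k then 1 else 0)" for k
    have "\<forall>x\<in>A. (\<Sum>k<n. c k * \<phi> k x) = 0"
    proof
      fix x assume x: "x \<in> A"
      have "(\<Sum>k<n. c k * \<phi> k x) = (\<Sum>k<n. \<phi> k x * \<phi> i (a k)) - (\<Sum>k<n. (if i = k then \<phi> k x else 0))"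
      proof -
        have "c k * \<phi> k x = \<phi> k x * \<phi> i (a k) - (if i = k then \<phi> k x else 0)" for k
          unfolding c_def by (auto simp: algebra_simps)
        hence "(\<Sum>k<n. c k * \<phi> k x) = (\<Sum>k<n. \<phi> k x * \<phi> i (a k) - (if i = k then \<phi> k x else 0))"
          by simp
        thus ?thesis by (simp only: sum_subtractf)
      qed
      also have "\<dots> = \<phi> i (P x) - \<phi> i x" using A1[OF x i] i by simp
      also have "\<dots> = 0" using A2[OF x] i by simp
      finally show "(\<Sum>k<n. c k * \<phi> k x) = 0" .
    qed
    hence "c j = 0" using LF j unfolding lin_indep_functionals_def by blast
    thus "\<phi> i (a j) = (if i = j then 1 else 0)" unfolding c_def by simp
  qed
qed



theorem proposition9p5:
  fixes J :: "'h::{real_inner, complete_space} \<Rightarrow> 'h"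
    and A :: "('h \<Rightarrow> 'h) set"
    and P :: "('h \<Rightarrow> 'h) \<Rightarrow> ('h \<Rightarrow> 'h)"
    and \<phi> \<psi> :: "nat \<Rightarrow> ('h \<Rightarrow> 'h) \<Rightarrow> complex"
    and a b :: "nat \<Rightarrow> ('h \<Rightarrow> 'h)"
    and n m :: nat
  assumes "von_neumann_algebra J A"
    and "markov_operator J A P"
    and "\<forall>x\<in>A. P (P x) = P x"
    and "holevo_rep J A P n \<phi> a" and "lin_indep_functionals A n \<phi>" and "lin_indep_ops J n a"
    and "holevo_rep J A P m \<psi> b" and "lin_indep_functionals A m \<psi>" and "lin_indep_ops J m b"
  shows "m = n \<and> (\<exists>\<sigma>. \<sigma> permutes {..<n} \<and>
           (\<forall>i<n. b i = a (\<sigma> i) \<and> (\<forall>x\<in>A. \<psi> i x = \<phi> (\<sigma> i) x)))"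
proof -
  note V = assms(1)
  note h1 = step1[OF assms(1,2,3,4,5,6)]
  note h2 = step1[OF assms(1,2,3,7,8,9)]
  have repA: "\<forall>x\<in>A. \<forall>\<xi>. P x \<xi> = (\<Sum>i<n. cmul J (\<phi> i x) (a i \<xi>))"
    and aA: "\<forall>i<n. a i \<in> A" and posa: "\<forall>i<n. positive_op J (a i)"
    and nsA: "\<forall>i<n. normal_state J A (\<phi> i)" and suma: "\<forall>\<xi>. (\<Sum>i<n. a i \<xi>) = \<xi>"
    using assms(4) by (auto simp: holevo_rep_def)
  have repB: "\<forall>x\<in>A. \<forall>\<xi>. P x \<xi> = (\<Sum>i<m. cmul J (\<psi> i x) (b i \<xi>))"
    and bA: "\<forall>i<m. b i \<in> A" and posb: "\<forall>i<m. positive_op J (b i)"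
    and nsB: "\<forall>i<m. normal_state J A (\<psi> i)" and sumb: "\<forall>\<xi>. (\<Sum>i<m. b i \<xi>) = \<xi>"
    using assms(7) by (auto simp: holevo_rep_def)
  have lfA: "\<forall>i<n. linear_functional_on J A (\<phi> i)" using nsA by (simp add: normal_state_def)
  have lfB: "\<forall>i<m. linear_functional_on J A (\<psi> i)" using nsB by (simp add: normal_state_def)
  have Pb: "b j = (\<lambda>\<xi>. \<Sum>i<n. cmul J (\<phi> i (b j)) (a i \<xi>))" if j: "j < m" for j
  proof
    fix \<xi>
    have "(\<Sum>k<m. cmul J (\<psi> k (b j)) (b k \<xi>)) = (\<Sum>k<m. if k = j then b k \<xi> else 0)"
      by (rule sum.cong) (use h2(2) j in auto)
    also have "\<dots> = b j \<xi>" using j by simp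
    finally have "P (b j) \<xi> = b j \<xi>" using repB bA j by auto
    thus "b j \<xi> = (\<Sum>i<n. cmul J (\<phi> i (b j)) (a i \<xi>))" using repA bA j by auto
  qed
  have Pa: "a j = (\<lambda>\<xi>. \<Sum>i<m. cmul J (\<psi> i (a j)) (b i \<xi>))" if j: "j < n" for j
  proof
    fix \<xi>
    have "(\<Sum>k<n. cmul J (\<phi> k (a j)) (a k \<xi>)) = (\<Sum>k<n. if k = j then a k \<xi> else 0)"
      by (rule sum.cong) (use h1(2) j in auto)
    also have "\<dots> = a j \<xi>" using j by simp
    finally have "P (a j) \<xi> = a j \<xi>" using repA aA j by auto
    thus "a j \<xi> = (\<Sum>i<m. cmul J (\<psi> i (a j)) (b i \<xi>))" using repB aA j by auto
  qed
  define c where "c j i = Re (\<phi> i (b j))" for j i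
  define d where "d i j = Re (\<psi> j (a i))" for i j
  have ofc: "\<phi> i (b j) = complex_of_real (c j i) \<and> c j i \<ge> 0" if "j < m" "i < n" for j i
  proof -
    have "Im (\<phi> i (b j)) = 0 \<and> Re (\<phi> i (b j)) \<ge> 0"
      using nsA bA posb that unfolding normal_state_def by blast
    thus ?thesis by (simp add: c_def complex_eq_iff)
  qed
  have ofd: "\<psi> j (a i) = complex_of_real (d i j) \<and> d i j \<ge> 0" if "i < n" "j < m" for j i
  proof -
    have "Im (\<psi> j (a i)) = 0 \<and> Re (\<psi> j (a i)) \<ge> 0"
      using nsB aA posa that unfolding normal_state_def by blast
    thus ?thesis by (simp add: d_def complex_eq_iff)
  qed
  have eqC: "\<forall>j<m. \<forall>k<m. (\<Sum>i<n. c j i * d i k) = (if j = k then 1 else 0)"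
  proof (intro allI impI)
    fix j k assume j: "j < m" and k: "k < m"
    have "\<psi> k (b j) = \<psi> k (\<lambda>\<xi>. \<Sum>i<n. cmul J (\<phi> i (b j)) (a i \<xi>))"
      by (rule arg_cong[OF Pb[OF j]])
    also have "\<dots> = (\<Sum>i<n. \<phi> i (b j) * \<psi> k (a i))"
      by (rule lc_lin[OF V]) (use lfB aA k in auto)
    also have "\<dots> = (\<Sum>i<n. complex_of_real (c j i * d i k))"
      by (rule sum.cong) (use ofc ofd j k in auto)
    also have "\<dots> = complex_of_real (\<Sum>i<n. c j i * d i k)" by simp
    finally have "complex_of_real (\<Sum>i<n. c j i * d i k) = (if k = j then 1 else 0)"
      using h2(2) j k by (simp del: of_real_sum of_real_mult)
    from arg_cong[where f=Re, OF this]
    show "(\<Sum>i<n. c j i * d i k) = (if j = k then 1 else 0)"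
      by (cases "j = k") (simp_all del: of_real_sum of_real_mult)
  qed
  have eqD: "\<forall>i<n. \<forall>l<n. (\<Sum>j<m. d i j * c j l) = (if i = l then 1 else 0)"
  proof (intro allI impI)
    fix i l assume i: "i < n" and l: "l < n"
    have "\<phi> l (a i) = \<phi> l (\<lambda>\<xi>. \<Sum>j<m. cmul J (\<psi> j (a i)) (b j \<xi>))"
      by (rule arg_cong[OF Pa[OF i]])
    also have "\<dots> = (\<Sum>j<m. \<psi> j (a i) * \<phi> l (b j))"
      by (rule lc_lin[OF V]) (use lfA bA l in auto)
    also have "\<dots> = (\<Sum>j<m. complex_of_real (d i j * c j l))"
      by (rule sum.cong) (use ofc ofd i l in auto)
    also have "\<dots> = complex_of_real (\<Sum>j<m. d i j * c j l)" by simp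
    finally have "complex_of_real (\<Sum>j<m. d i j * c j l) = (if l = i then 1 else 0)"
      using h1(2) i l by (simp del: of_real_sum of_real_mult)
    from arg_cong[where f=Re, OF this]
    show "(\<Sum>j<m. d i j * c j l) = (if i = l then 1 else 0)"
      by (cases "i = l") (simp_all del: of_real_sum of_real_mult)
  qed
  have col: "\<forall>i<n. (\<Sum>j<m. c j i) = 1"
  proof (intro allI impI)
    fix i assume i: "i < n"
    have idf: "id = (\<lambda>\<xi>. \<Sum>j<m. cmul J ((\<lambda>_. 1) j) (b j \<xi>))" using sumb by auto
    have "1 = \<phi> i id" using nsA i by (simp add: normal_state_def)
    also have "\<dots> = (\<Sum>j<m. 1 * \<phi> i (b j))"
      by (subst idf, rule lc_lin[OF V]) (use lfA bA i in auto)
    also have "\<dots> = (\<Sum>j<m. complex_of_real (c j i))"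
      by (rule sum.cong) (use ofc i in auto)
    also have "\<dots> = complex_of_real (\<Sum>j<m. c j i)" by simp
    finally show "(\<Sum>j<m. c j i) = 1"
      by (metis of_real_eq_1_iff)
  qed
  have "m = n \<and> (\<exists>\<sigma>. \<sigma> permutes {..<n} \<and> (\<forall>j<n. \<forall>i<n. c j i = (if i = \<sigma> j then 1 else 0)))"
    by (rule comb) (use ofc ofd eqC eqD col in auto)
  then obtain \<sigma> where mn: "m = n" and perm: "\<sigma> permutes {..<n}"
    and cv: "\<forall>j<n. \<forall>i<n. c j i = (if i = \<sigma> j then 1 else 0)" by blast
  have sl: "\<sigma> j < n" if "j < n" for j using permutes_in_image[OF perm] that by simp
  have inj: "\<sigma> j = \<sigma> k \<longleftrightarrow> j = k" for j k using permutes_inj[OF perm] by (simp add: inj_eq)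
  have fb: "\<phi> i (b j) = (if i = \<sigma> j then 1 else 0)" if "j < n" "i < n" for j i
    using ofc[of j i] cv that mn by simp
  have bj: "b j = a (\<sigma> j)" if j: "j < n" for j
  proof
    fix \<xi>
    have "b j \<xi> = (\<Sum>i<n. cmul J (\<phi> i (b j)) (a i \<xi>))" using Pb[of j] j mn by metis
    also have "\<dots> = (\<Sum>i<n. if i = \<sigma> j then a i \<xi> else 0)"
      by (rule sum.cong) (use fb j in auto)
    also have "\<dots> = a (\<sigma> j) \<xi>" using sl[OF j] by simp
    finally show "b j \<xi> = a (\<sigma> j) \<xi>" .
  qed
  have ps: "\<psi> j x = \<phi> (\<sigma> j) x" if j: "j < n" and x: "x \<in> A" for j x
  proof -
    have Pf: "P x = (\<lambda>\<xi>. \<Sum>k<m. cmul J (\<psi> k x) (b k \<xi>))" using repB x by auto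
    have "\<phi> (\<sigma> j) x = \<phi> (\<sigma> j) (P x)" using h1(1) x sl[OF j] by simp
    also have "\<dots> = (\<Sum>k<m. \<psi> k x * \<phi> (\<sigma> j) (b k))"
      using Pf lc_lin[OF V, of "\<phi> (\<sigma> j)" m b] lfA bA sl[OF j] by simp
    also have "\<dots> = (\<Sum>k<n. if k = j then \<psi> k x else 0)"
      by (rule sum.cong) (use mn fb sl j inj in auto)
    also have "\<dots> = \<psi> j x" using j by simp
    finally show ?thesis by simp
  qed
  show ?thesis using mn perm bj ps by blast
qed


end
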